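(* Let $n_1,n_2,n_3,n_4,k_1,k_2$ be six pairwise distinct positive integers. Then the $4\times 4$ real matrix whose $i$-th row ($i=1,2,3,4$) is $$\Big(\frac{1}{n_i^2},\ \frac{1}{n_i},\ \frac{1}{n_i-k_1}+\frac{1}{n_i+k_1},\ \frac{1}{n_i-k_2}+\frac{1}{n_i+k_2}\Big)$$ is nonsingular (has full rank). *)

theory Defs
  imports "HOL-Analysis.Analysis"
begin

definition lemma3_row :: "nat \<Rightarrow> nat \<Rightarrow> nat \<Rightarrow> real ^ 4" where
  "lemma3_row k1 k2 n = vector
     [1 / (real n)^2,
      1 / real n,
      1 / (real n - real k1) + 1 / (real n + real k1),
      1 / (real n - real k2) + 1 / (real n + real k2)]"

definition lemma3_matrix :: "nat \<Rightarrow> nat \<Rightarrow> nat \<Rightarrow> nat \<Rightarrow> nat \<Rightarrow> nat \<Rightarrow> real ^ 4 ^ 4" where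
  "lemma3_matrix n1 n2 n3 n4 k1 k2 =
     vector [lemma3_row k1 k2 n1, lemma3_row k1 k2 n2, lemma3_row k1 k2 n3, lemma3_row k1 k2 n4]"

end

theory Submission
  imports Defs "HOL-Computational_Algebra.Polynomial"
begin

lemma vector_4 [simp]:
 "(vector [x,y,z,w] ::('a::zero)^4)$1 = x"
 "(vector [x,y,z,w] ::('a::zero)^4)$2 = y"
 "(vector [x,y,z,w] ::('a::zero)^4)$3 = z"
 "(vector [x,y,z,w] ::('a::zero)^4)$4 = w"
  unfolding vector_def by simp_all

lemma cubic_zero:
  fixes q0 q1 q2 q3 x1 x2 x3 x4 :: real
  assumes "distinct [x1,x2,x3,x4]"
    and "\<And>x. x \<in> {x1,x2,x3,x4} \<Longrightarrow> q0 + q1*x + q2*x^2 + q3*x^3 = 0"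
  shows "q0 = 0 \<and> q1 = 0 \<and> q2 = 0 \<and> q3 = 0"
proof (rule ccontr)
  let ?q = "[:q0,q1,q2,q3:]"
  assume nz: "\<not> (q0 = 0 \<and> q1 = 0 \<and> q2 = 0 \<and> q3 = 0)"
  hence qnz: "?q \<noteq> 0" by auto
  hence "card {x. poly ?q x = 0} \<le> degree ?q" by (rule card_poly_roots_bound)
  also have "degree ?q \<le> 3"
    by (rule order.trans[OF degree_pCons_le]) (simp add: order.trans[OF degree_pCons_le])
  finally have c: "card {x. poly ?q x = 0} \<le> 3" .
  have pq: "poly ?q x = q0 + q1*x + q2*x^2 + q3*x^3" for x
    by (simp add: algebra_simps power2_eq_square power3_eq_cube)
  have sub: "set [x1,x2,x3,x4] \<subseteq> {x. poly ?q x = 0}"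
    using assms(2) unfolding pq by simp
  have fin: "finite {x. poly ?q x = 0}" using qnz poly_roots_finite by blast
  have "card (set [x1,x2,x3,x4]) \<le> 3" using card_mono[OF fin sub] c by linarith
  moreover have "card (set [x1,x2,x3,x4]) = 4" using distinct_card[OF assms(1)] by simp
  ultimately show False by simp
qed

lemma key:
  fixes a b c d x1 x2 x3 x4 k1 k2 :: real
  assumes pos: "0 < x1" "0 < x2" "0 < x3" "0 < x4" "0 < k1" "0 < k2"
    and dist: "distinct [x1, x2, x3, x4, k1, k2]"
    and eq: "\<And>x. x \<in> {x1,x2,x3,x4} \<Longrightarrow>
        a * (1 / x^2) + b * (1 / x) + c * (1 / (x - k1) + 1 / (x + k1)) + d * (1 / (x - k2) + 1 / (x + k2)) = 0"
  shows "a = 0 \<and> b = 0 \<and> c = 0 \<and> d = 0"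
proof -
  define P where "P x = a*(x^2-k1^2)*(x^2-k2^2) + b*x*(x^2-k1^2)*(x^2-k2^2)
     + 2*c*x^3*(x^2-k2^2) + 2*d*x^3*(x^2-k1^2)" for x
  have P0: "P x = 0" if "x \<in> {x1,x2,x3,x4}" for x
  proof -
    have xp: "x > 0" "x \<noteq> k1" "x \<noteq> k2" using that pos dist by auto
    hence nz: "x - k1 \<noteq> 0" "x + k1 \<noteq> 0" "x - k2 \<noteq> 0" "x + k2 \<noteq> 0" "x \<noteq> 0"
      using pos by auto
    have h1: "1 / (x - k1) + 1 / (x + k1) = 2*x/((x-k1)*(x+k1))" using nz by (simp add: field_simps)
    have h2: "1 / (x - k2) + 1 / (x + k2) = 2*x/((x-k2)*(x+k2))" using nz by (simp add: field_simps)
    define A1 where "(A1::real) = (x-k1)*(x+k1)"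
    define A2 where "(A2::real) = (x-k2)*(x+k2)"
    have A1nz: "A1 \<noteq> 0" and A2nz: "A2 \<noteq> 0" using nz unfolding A1_def A2_def by auto
    have "(a * (1 / x^2) + b * (1 / x) + c * (2*x/A1) + d * (2*x/A2)) * (x^2*A1*A2) = 0"
      using eq[OF that] h1 h2 unfolding A1_def A2_def by simp
    also have "(a * (1 / x^2) + b * (1 / x) + c * (2*x/A1) + d * (2*x/A2)) * (x^2*A1*A2)
       = a*A1*A2 + b*x*A1*A2 + 2*c*x^3*A2 + 2*d*x^3*A1"
      using A1nz A2nz nz(5) by (simp add: distrib_right power2_eq_square power3_eq_cube)
    also have "\<dots> = P x" unfolding P_def A1_def A2_def by (simp add: algebra_simps power2_eq_square)
    finally show ?thesis .
  qed
  define e1 where "(e1::real) = x1+x2+x3+x4"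
  define e2 where "(e2::real) = x1*x2+x1*x3+x1*x4+x2*x3+x2*x4+x3*x4"
  define e3 where "(e3::real) = x1*x2*x3+x1*x2*x4+x1*x3*x4+x2*x3*x4"
  define e4 where "(e4::real) = x1*x2*x3*x4"
  define R where "R x = (x-x1)*(x-x2)*(x-x3)*(x-x4)" for x
  have Rexp: "R x = x^4 - e1*x^3 + e2*x^2 - e3*x + e4" for x
    unfolding R_def e1_def e2_def e3_def e4_def by (simp add: algebra_simps power2_eq_square power3_eq_cube power4_eq_xxxx)
  define sk where "(sk::real) = k1^2+k2^2"
  define q where "(q::real) = k1^2*k2^2"
  define p0 where "(p0::real) = a*q"
  define p1 where "(p1::real) = b*q"
  define p2 where "(p2::real) = 0 - a * sk"
  define p3 where "(p3::real) = 0 - b * sk - 2*c*k2^2 - 2*d*k1^2"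
  define p4 where "(p4::real) = a"
  define p5 where "(p5::real) = b+2*c+2*d"
  have Pexp: "P x = p0 + p1*x + p2*x^2 + p3*x^3 + p4*x^4 + p5*x^5" for x
    unfolding P_def p0_def p1_def p2_def p3_def p4_def p5_def sk_def q_def
    by (simp add: algebra_simps eval_nat_numeral)
  define \<alpha> where "(\<alpha>::real) = p5"
  define \<beta> where "(\<beta>::real) = p4 + p5*e1"
  define r3 where "(r3::real) = p3 - (\<alpha>*e2 - \<beta>*e1)"
  define r2 where "(r2::real) = p2 - (\<beta>*e2 - \<alpha>*e3)"
  define r1 where "(r1::real) = p1 - (\<alpha>*e4 - \<beta>*e3)"
  define r0 where "(r0::real) = p0 - \<beta>*e4"
  have diff: "P x - (\<alpha>*x+\<beta>)*R x = r0 + r1*x + r2*x^2 + r3*x^3" for x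
    unfolding Pexp Rexp r0_def r1_def r2_def r3_def \<alpha>_def \<beta>_def
    by (simp add: algebra_simps eval_nat_numeral)
  have rz: "r0 = 0 \<and> r1 = 0 \<and> r2 = 0 \<and> r3 = 0"
  proof (rule cubic_zero)
    show "distinct [x1,x2,x3,x4]" using dist by auto
    fix x assume "x \<in> {x1,x2,x3,x4}"
    hence "P x = 0" "R x = 0" using P0 unfolding R_def by auto
    thus "r0 + r1*x + r2*x^2 + r3*x^3 = 0" using diff[of x] by simp
  qed
  have PR: "P x = (\<alpha>*x+\<beta>)*R x" for x using diff[of x] rz by simp
  define D where "D y = y^2 + e2*y + e4" for y
  have e2p: "e2 > 0" and e4p: "e4 > 0" and e1p: "e1 > 0" and e3p: "e3 > 0"
    using pos unfolding e1_def e2_def e3_def e4_def by (auto intro!: add_pos_pos mult_pos_pos)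
  have Dp: "D y > 0" if "y > 0" for y
    using that e2p e4p unfolding D_def by (simp add: add_pos_pos)
  have lin: "\<beta> * D (k^2) = \<alpha> * k^2 * (e1*k^2 + e3)" if "k = k1 \<or> k = k2" for k
  proof -
    have "P k + P (-k) = 0" using that unfolding P_def
      by (auto simp: algebra_simps power2_eq_square power3_eq_cube)
    hence "(\<alpha>*k+\<beta>)*R k + (\<alpha>*(-k)+\<beta>)*R (-k) = 0" using PR by simp
    hence "2*(\<beta> * D (k^2) - \<alpha> * k^2 * (e1*k^2 + e3)) = 0"
      unfolding Rexp D_def by (simp add: algebra_simps power2_eq_square power3_eq_cube power4_eq_xxxx)
    thus ?thesis by simp
  qed
  define y1 where "(y1::real) = k1^2"
  define y2 where "(y2::real) = k2^2"
  have y12: "y1 > 0" "y2 > 0" "y1 \<noteq> y2" using pos dist unfolding y1_def y2_def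
    by (auto simp: power2_eq_square) (metis pos(5,6) power2_eq_square power2_eq_imp_eq less_imp_le)
  have l1: "\<beta> * D y1 = \<alpha> * y1 * (e1*y1 + e3)" using lin[of k1] unfolding y1_def by simp
  have l2: "\<beta> * D y2 = \<alpha> * y2 * (e1*y2 + e3)" using lin[of k2] unfolding y2_def by simp
  have "\<alpha> * (y1*(e1*y1+e3)*D y2 - y2*(e1*y2+e3)*D y1) = 0"
  proof -
    have "\<alpha> * (y1*(e1*y1+e3)*D y2 - y2*(e1*y2+e3)*D y1) = (\<alpha> * y1 * (e1*y1 + e3)) * D y2 - (\<alpha> * y2 * (e1*y2 + e3)) * D y1"
      by (simp add: algebra_simps)
    also have "\<dots> = 0" unfolding l1[symmetric] l2[symmetric] by (simp add: algebra_simps)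
    finally show ?thesis .
  qed
  moreover have "y1*(e1*y1+e3)*D y2 - y2*(e1*y2+e3)*D y1
      = (y1-y2)*((e1*e2-e3)*y1*y2 + e1*e4*(y1+y2) + e3*e4)"
    unfolding D_def by (simp add: algebra_simps power2_eq_square)
  moreover have "e1*e2 - e3 > 0"
  proof -
    have "e1*e2 - e3 = 2*e3 + (x1*x1*(x2+x3+x4) + x2*x2*(x1+x3+x4) + x3*x3*(x1+x2+x4) + x4*x4*(x1+x2+x3))"
      unfolding e1_def e2_def e3_def by (simp add: algebra_simps)
    moreover have "x1*x1*(x2+x3+x4) + x2*x2*(x1+x3+x4) + x3*x3*(x1+x2+x4) + x4*x4*(x1+x2+x3) > 0"
      using pos by (intro add_pos_pos mult_pos_pos) auto
    ultimately show ?thesis using e3p by linarith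
  qed
  moreover have "(e1*e2-e3)*y1*y2 + e1*e4*(y1+y2) + e3*e4 > 0"
    using calculation(3) y12 e1p e3p e4p by (intro add_pos_pos mult_pos_pos) auto
  ultimately have a0: "\<alpha> = 0" using y12 by simp
  hence b0: "\<beta> = 0" using l1 Dp[OF y12(1)] by simp
  have Pz: "P x = 0" for x using PR a0 b0 by simp
  have "P 0 = a*k1^2*k2^2" unfolding P_def by simp
  hence A: "a = 0" using Pz[of 0] pos by simp
  have "P k1 = 2*c*k1^3*(k1^2-k2^2)" unfolding P_def by (simp add: algebra_simps)
  moreover have "k1^2 \<noteq> k2^2" using y12 unfolding y1_def y2_def by simp
  ultimately have C: "c = 0" using Pz[of k1] pos by simp
  have "P k2 = 2*d*k2^3*(k2^2-k1^2)" unfolding P_def by (simp add: algebra_simps)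
  hence D: "d = 0" using Pz[of k2] pos \<open>k1^2 \<noteq> k2^2\<close> by simp
  have "P (k1+k2) = b*(k1+k2)*((k1+k2)^2-k1^2)*((k1+k2)^2-k2^2)" unfolding P_def A C D by simp
  moreover have "(k1+k2)^2-k1^2 > 0" "(k1+k2)^2-k2^2 > 0" using pos by (auto simp: power2_eq_square algebra_simps intro!: add_pos_pos mult_pos_pos)
  ultimately have B: "b = 0" using Pz[of "k1+k2"] pos by simp
  show ?thesis using A B C D by simp
qed


theorem lemma3:
  fixes n1 n2 n3 n4 k1 k2 :: nat
  assumes "0 < n1" "0 < n2" "0 < n3" "0 < n4" "0 < k1" "0 < k2"
    and "distinct [n1, n2, n3, n4, k1, k2]"
  shows "invertible (lemma3_matrix n1 n2 n3 n4 k1 k2)"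
proof -
  let ?A = "lemma3_matrix n1 n2 n3 n4 k1 k2"
  have "\<forall>v. ?A *v v = 0 \<longrightarrow> v = 0"
  proof (intro allI impI)
    fix v :: "real^4"
    assume h: "?A *v v = 0"
    have e: "\<And>i. (?A *v v) $ i = 0" using h by simp
    have ds: "distinct [real n1, real n2, real n3, real n4, real k1, real k2]"
      using assms(7) by auto
    have "v$1 = 0 \<and> v$2 = 0 \<and> v$3 = 0 \<and> v$4 = 0"
    proof (rule key[OF _ _ _ _ _ _ ds])
      fix x assume "x \<in> {real n1, real n2, real n3, real n4}"
      then show "v $ 1 * (1 / x\<^sup>2) + v $ 2 * (1 / x) + v $ 3 * (1 / (x - real k1) + 1 / (x + real k1)) +
         v $ 4 * (1 / (x - real k2) + 1 / (x + real k2)) = 0"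
        using e[of 1] e[of 2] e[of 3] e[of 4]
        by (auto simp: matrix_vector_mult_def sum_4 lemma3_matrix_def lemma3_row_def algebra_simps)
    qed (use assms in auto)
    then show "v = 0" by (simp add: vec_eq_iff forall_4)
  qed
  then show ?thesis
    by (simp add: invertible_left_inverse matrix_left_invertible_ker)
qed

end
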